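(* Let $G$ be a torsion abelian group and $\varphi\colon G\to G$ a surjective endomorphism that is positively expansive. Then there exists a finite subgroup $K\leq G$ such that for every finite subgroup $F\leq G$ there exists $m\in\mathbb N$ with $F\subseteq\varphi^mK$.
   Context: $\mathbb N=\{0,1,2,\dots\}$. An endomorphism $\varphi$ of an abelian group $G$ is positively expansive if there is a finite subgroup $S\leq G$ such that for every finite subgroup $F\leq G$ there is $n\in\mathbb N$ with $F\subseteq\sum_{k=0}^n\varphi^kS$. *)

theory Defs
  imports Main
begin

text \<open>Abelian groups are rendered as types of class ab_group_add (the whole type is G).\<close>

definition is_subgroup :: "'a::ab_group_add set \<Rightarrow> bool" where
  "is_subgroup H \<longleftrightarrow> 0 \<in> H \<and> (\<forall>x\<in>H. \<forall>y\<in>H. x + y \<in> H) \<and> (\<forall>x\<in>H. - x \<in> H)"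

definition is_endo :: "('a::ab_group_add \<Rightarrow> 'a) \<Rightarrow> bool" where
  "is_endo \<phi> \<longleftrightarrow> (\<forall>x y. \<phi> (x + y) = \<phi> x + \<phi> y)"

definition torsion_group :: "'a::ab_group_add set \<Rightarrow> bool" where
  "torsion_group G \<longleftrightarrow> (\<forall>x\<in>G. \<exists>n::nat. n > 0 \<and> (\<Sum>i<n. x) = 0)"

definition iter_sum :: "('a::ab_group_add \<Rightarrow> 'a) \<Rightarrow> 'a set \<Rightarrow> nat \<Rightarrow> 'a set" where
  "iter_sum \<phi> S n = {(\<Sum>k\<le>n. f k) | f. \<forall>k\<le>n. f k \<in> (\<phi> ^^ k) ` S}"

definition pos_expansive :: "('a::ab_group_add \<Rightarrow> 'a) \<Rightarrow> bool" where
  "pos_expansive \<phi> \<longleftrightarrow> (\<exists>S. finite S \<and> is_subgroup S \<and>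
     (\<forall>F. finite F \<and> is_subgroup F \<longrightarrow> (\<exists>n. F \<subseteq> iter_sum \<phi> S n)))"

end

theory Submission
  imports Defs "HOL-Library.FuncSet"
begin

lemma endo_0: "is_endo \<phi> \<Longrightarrow> \<phi> 0 = 0"
  unfolding is_endo_def by (metis add_cancel_right_right add_0)

lemma endo_minus: "is_endo \<phi> \<Longrightarrow> \<phi> (- x) = - \<phi> x"
  using endo_0[of \<phi>] unfolding is_endo_def
  by (metis add.right_inverse add_eq_0_iff)

lemma endo_pow: "is_endo \<phi> \<Longrightarrow> is_endo (\<phi> ^^ k)"
  by (induction k) (auto simp: is_endo_def)

lemma sub_image: "is_endo \<psi> \<Longrightarrow> is_subgroup H \<Longrightarrow> is_subgroup (\<psi> ` H)"
  unfolding is_subgroup_def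
proof (intro conjI ballI)
  assume e: "is_endo \<psi>" and h: "0 \<in> H \<and> (\<forall>x\<in>H. \<forall>y\<in>H. x + y \<in> H) \<and> (\<forall>x\<in>H. - x \<in> H)"
  show "0 \<in> \<psi> ` H" using h endo_0[OF e] by (metis image_eqI)
  fix x y assume "x \<in> \<psi> ` H" "y \<in> \<psi> ` H"
  then obtain a b where "a \<in> H" "b \<in> H" "x = \<psi> a" "y = \<psi> b" by auto
  then show "x + y \<in> \<psi> ` H" using h e unfolding is_endo_def by (metis image_eqI)
next
  fix x assume e: "is_endo \<psi>" and h: "0 \<in> H \<and> (\<forall>x\<in>H. \<forall>y\<in>H. x + y \<in> H) \<and> (\<forall>x\<in>H. - x \<in> H)"
    and "x \<in> \<psi> ` H"
  then obtain a where "a \<in> H" "x = \<psi> a" by auto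
  then show "- x \<in> \<psi> ` H" using h endo_minus[OF e] by (metis image_eqI)
qed

lemma sub_sum: assumes "is_subgroup H" "finite A" "\<forall>k\<in>A. f k \<in> H" shows "sum f A \<in> H"
  using assms(2,3) by (induction A rule: finite_induct) (use assms(1) in \<open>auto simp: is_subgroup_def\<close>)

lemma iter_sum_sub:
  assumes e: "is_endo \<phi>" and s: "is_subgroup S"
  shows "is_subgroup (iter_sum \<phi> S n)"
proof -
  have sk: "is_subgroup ((\<phi> ^^ k) ` S)" for k using sub_image[OF endo_pow[OF e] s] .
  have "0 \<in> iter_sum \<phi> S n"
    unfolding iter_sum_def using sk by (auto simp: is_subgroup_def intro!: exI[of _ "\<lambda>_. 0"])
  moreover have "x + y \<in> iter_sum \<phi> S n" if xy: "x \<in> iter_sum \<phi> S n" "y \<in> iter_sum \<phi> S n" for x y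
  proof -
    obtain f where f: "x = (\<Sum>k\<le>n. f k)" "\<forall>k\<le>n. f k \<in> (\<phi> ^^ k) ` S" using xy(1) unfolding iter_sum_def by auto
    obtain g where g: "y = (\<Sum>k\<le>n. g k)" "\<forall>k\<le>n. g k \<in> (\<phi> ^^ k) ` S" using xy(2) unfolding iter_sum_def by auto
    have "x + y = (\<Sum>k\<le>n. f k + g k)" using f g by (simp add: sum.distrib)
    moreover have "\<forall>k\<le>n. f k + g k \<in> (\<phi> ^^ k) ` S" using f g sk unfolding is_subgroup_def by blast
    ultimately show ?thesis unfolding iter_sum_def by blast
  qed
  moreover have "- x \<in> iter_sum \<phi> S n" if xx: "x \<in> iter_sum \<phi> S n" for x
  proof -
    obtain f where f: "x = (\<Sum>k\<le>n. f k)" "\<forall>k\<le>n. f k \<in> (\<phi> ^^ k) ` S" using xx unfolding iter_sum_def by auto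
    have "- x = (\<Sum>k\<le>n. - f k)" using f by (simp add: sum_negf)
    moreover have "\<forall>k\<le>n. - f k \<in> (\<phi> ^^ k) ` S" using f sk unfolding is_subgroup_def by blast
    ultimately show ?thesis unfolding iter_sum_def by blast
  qed
  ultimately show ?thesis unfolding is_subgroup_def by blast
qed

lemma iter_sum_finite:
  assumes "finite S"
  shows "finite (iter_sum \<phi> S n)"
proof -
  have "iter_sum \<phi> S n \<subseteq> (\<lambda>f. \<Sum>k\<le>n. f k) ` (PiE {..n} (\<lambda>k. (\<phi> ^^ k) ` S))"
  proof
    fix x assume "x \<in> iter_sum \<phi> S n"
    then obtain f where f: "x = (\<Sum>k\<le>n. f k)" "\<forall>k\<le>n. f k \<in> (\<phi> ^^ k) ` S" unfolding iter_sum_def by auto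
    have "restrict f {..n} \<in> PiE {..n} (\<lambda>k. (\<phi> ^^ k) ` S)" using f by (auto simp: PiE_iff)
    moreover have "x = (\<Sum>k\<le>n. restrict f {..n} k)" using f by simp
    ultimately show "x \<in> (\<lambda>f. \<Sum>k\<le>n. f k) ` (PiE {..n} (\<lambda>k. (\<phi> ^^ k) ` S))" by blast
  qed
  moreover have "finite (PiE {..n} (\<lambda>k. (\<phi> ^^ k) ` S))" using assms by (simp add: finite_PiE)
  ultimately show ?thesis using finite_subset by blast
qed

lemma zero_in_pow:
  assumes e: "is_endo \<phi>" and s: "is_subgroup S"
  shows "0 \<in> (\<phi> ^^ k) ` S"
  using sub_image[OF endo_pow[OF e] s] unfolding is_subgroup_def by blast

lemma iter_sum_single:
  assumes e: "is_endo \<phi>" and s: "is_subgroup S" and j: "j \<le> n" and x: "x \<in> (\<phi> ^^ j) ` S"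
  shows "x \<in> iter_sum \<phi> S n"
proof -
  define f where "f = (\<lambda>k. if k = j then x else 0)"
  have "(\<Sum>k\<le>n. f k) = x" using j unfolding f_def by (simp add: sum.delta)
  moreover have "\<forall>k\<le>n. f k \<in> (\<phi> ^^ k) ` S" using x zero_in_pow[OF e s] unfolding f_def by auto
  ultimately show ?thesis unfolding iter_sum_def by blast
qed

lemma iter_sum_mono:
  assumes e: "is_endo \<phi>" and s: "is_subgroup S" and nm: "n \<le> m"
  shows "iter_sum \<phi> S n \<subseteq> iter_sum \<phi> S m"
proof
  fix x assume "x \<in> iter_sum \<phi> S n"
  then obtain f where f: "x = (\<Sum>k\<le>n. f k)" "\<forall>k\<le>n. f k \<in> (\<phi> ^^ k) ` S" unfolding iter_sum_def by auto
  define g where "g = (\<lambda>k. if k \<le> n then f k else 0)"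
  have "(\<Sum>k\<le>m. g k) = (\<Sum>k\<le>n. g k)"
    by (rule sum.mono_neutral_right) (use nm in \<open>auto simp: g_def\<close>)
  also have "\<dots> = (\<Sum>k\<le>n. f k)" by (rule sum.cong) (auto simp: g_def)
  finally have "(\<Sum>k\<le>m. g k) = x" using f by simp
  moreover have "\<forall>k\<le>m. g k \<in> (\<phi> ^^ k) ` S" using f zero_in_pow[OF e s] unfolding g_def by auto
  ultimately show "x \<in> iter_sum \<phi> S m" unfolding iter_sum_def by blast
qed

lemma msum_add: "(\<Sum>i<(a::nat)+b. (p::'a::ab_group_add)) = (\<Sum>i<a. p) + (\<Sum>i<b. p)"
  by (induction b) (simp_all add: algebra_simps)

lemma msum_mult:
  assumes "(\<Sum>i<(n::nat). (p::'a::ab_group_add)) = 0"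
  shows "(\<Sum>i<n*(q::nat). p) = 0"
proof (induction q)
  case (Suc q)
  have "n * Suc q = n*q + n" by simp
  then show ?case using Suc assms by (simp add: msum_add)
qed simp

lemma msum_mod:
  assumes "(\<Sum>i<(n::nat). (p::'a::ab_group_add)) = 0"
  shows "(\<Sum>i<(k::nat). p) = (\<Sum>i<k mod n. p)"
proof -
  have "(\<Sum>i<k. p) = (\<Sum>i<n*(k div n) + k mod n. p)" by (simp del: div_mult_mod_eq add: mult_div_mod_eq)
  also have "\<dots> = (\<Sum>i<k mod n. p)" by (simp only: msum_add msum_mult[OF assms]) simp
  finally show ?thesis .
qed

lemma cyclic:
  assumes t: "torsion_group (UNIV :: 'a::ab_group_add set)"
  shows "\<exists>C. finite C \<and> is_subgroup C \<and> (p::'a) \<in> C"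
proof -
  obtain n :: nat where n: "n > 0" "(\<Sum>i<n. p) = 0" using t unfolding torsion_group_def by blast
  define m where "m = (\<lambda>k::nat. (\<Sum>i<k. p))"
  have mm: "m k = m (k mod n)" for k :: nat unfolding m_def using msum_mod[OF n(2)] .
  have ma: "m (a+b) = m a + m b" for a b :: nat unfolding m_def by (rule msum_add)
  define C where "C = m ` {..<n}"
  have inC: "m k \<in> C" for k :: nat unfolding C_def using mm[of k] n(1) by auto
  have "finite C" unfolding C_def by simp
  moreover have "is_subgroup C"
    unfolding is_subgroup_def
  proof (intro conjI ballI)
    show "0 \<in> C" using inC[of 0] unfolding m_def by simp
    fix x y assume "x \<in> C" "y \<in> C"
    then obtain a b where "x = m a" "y = m b" unfolding C_def by auto
    then show "x + y \<in> C" using inC[of "a+b"] ma by simp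
  next
    fix x assume "x \<in> C"
    then obtain a where a: "x = m a" "a < n" unfolding C_def by auto
    have "m (n - a) + m a = 0" using ma[of "n-a" a] a(2) n(2) unfolding m_def by simp
    then have "- x = m (n - a)" using a(1) by (simp add: neg_eq_iff_add_eq_0 add.commute)
    then show "- x \<in> C" using inC by simp
  qed
  moreover have "p \<in> C" using inC[of 1] unfolding m_def by simp
  ultimately show ?thesis by blast
qed

theorem lemma4p1:
  fixes \<phi> :: "'a::ab_group_add \<Rightarrow> 'a"
  assumes "torsion_group (UNIV :: 'a set)"
    and "is_endo \<phi>"
    and "surj \<phi>"
    and "pos_expansive \<phi>"
  shows "\<exists>K. finite K \<and> is_subgroup K \<and>
           (\<forall>F. finite F \<and> is_subgroup F \<longrightarrow> (\<exists>m::nat. F \<subseteq> (\<phi> ^^ m) ` K))"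
proof -
  note e = assms(2)
  obtain S where S: "finite S" "is_subgroup S"
    "\<forall>F. finite F \<and> is_subgroup F \<longrightarrow> (\<exists>n. F \<subseteq> iter_sum \<phi> S n)"
    using assms(4) unfolding pos_expansive_def by blast
  have "\<forall>s\<in>S. \<exists>n. s \<in> \<phi> ` iter_sum \<phi> S n"
  proof
    fix s assume "s \<in> S"
    obtain p where p: "s = \<phi> p" using assms(3) by (metis surjD)
    obtain C where C: "finite C" "is_subgroup C" "p \<in> C" using cyclic[OF assms(1)] by blast
    obtain n where "C \<subseteq> iter_sum \<phi> S n" using S(3) C by blast
    then show "\<exists>n. s \<in> \<phi> ` iter_sum \<phi> S n" using p C(3) by blast
  qed
  then obtain nn where nn: "\<forall>s\<in>S. s \<in> \<phi> ` iter_sum \<phi> S (nn s)" by metis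
  define N where "N = Max (nn ` S)"
  define K where "K = iter_sum \<phi> S N"
  have SK: "S \<subseteq> \<phi> ` K"
  proof
    fix s assume s: "s \<in> S"
    have "nn s \<le> N" unfolding N_def using S(1) s by simp
    then show "s \<in> \<phi> ` K" using nn s iter_sum_mono[OF e S(2)] unfolding K_def by blast
  qed
  have Ksub: "is_subgroup K" unfolding K_def using iter_sum_sub[OF e S(2)] .
  have pKsub: "is_subgroup ((\<phi> ^^ j) ` K)" for j using sub_image[OF endo_pow[OF e] Ksub] .
  have KpK: "K \<subseteq> \<phi> ` K"
  proof
    fix x assume "x \<in> K"
    then obtain f where f: "x = (\<Sum>k\<le>N. f k)" "\<forall>k\<le>N. f k \<in> (\<phi> ^^ k) ` S"
      unfolding K_def iter_sum_def by auto
    have "\<forall>k\<in>{..N}. f k \<in> \<phi> ` K"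
    proof
      fix k assume k: "k \<in> {..N}"
      show "f k \<in> \<phi> ` K"
      proof (cases k)
        case 0
        have "f 0 \<in> (\<phi> ^^ 0) ` S" using f by blast
        then show ?thesis using 0 SK by auto
      next
        case (Suc j)
        obtain s where s: "s \<in> S" "f k = (\<phi> ^^ k) s" using f k by auto
        have "(\<phi> ^^ j) s \<in> K" unfolding K_def
          using iter_sum_single[OF e S(2), of j N] s Suc k by auto
        moreover have "f k = \<phi> ((\<phi> ^^ j) s)" using s Suc by simp
        ultimately show ?thesis by blast
      qed
    qed
    then show "x \<in> \<phi> ` K" unfolding f(1) by (rule sub_sum[OF sub_image[OF e Ksub] finite_atMost])
  qed
  have mono1: "(\<phi> ^^ j) ` K \<subseteq> (\<phi> ^^ Suc j) ` K" for j
  proof -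
    have "(\<phi> ^^ j) ` K \<subseteq> (\<phi> ^^ j) ` (\<phi> ` K)" using KpK by blast
    also have "\<dots> = (\<phi> ^^ Suc j) ` K" by (simp add: image_comp funpow_swap1)
    finally show ?thesis .
  qed
  have monoK: "j \<le> m \<Longrightarrow> (\<phi> ^^ j) ` K \<subseteq> (\<phi> ^^ m) ` K" for j m
  proof (induction m)
    case (Suc m) then show ?case using mono1[of m] by (cases "j = Suc m") auto
  qed simp
  have "\<forall>F. finite F \<and> is_subgroup F \<longrightarrow> (\<exists>m::nat. F \<subseteq> (\<phi> ^^ m) ` K)"
  proof (intro allI impI)
    fix F :: "'a set" assume "finite F \<and> is_subgroup F"
    then obtain m where m: "F \<subseteq> iter_sum \<phi> S m" using S(3) by blast
    have "iter_sum \<phi> S m \<subseteq> (\<phi> ^^ m) ` K"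
    proof
      fix x assume "x \<in> iter_sum \<phi> S m"
      then obtain f where f: "x = (\<Sum>k\<le>m. f k)" "\<forall>k\<le>m. f k \<in> (\<phi> ^^ k) ` S"
        unfolding iter_sum_def by auto
      have "\<forall>k\<in>{..m}. f k \<in> (\<phi> ^^ m) ` K"
      proof
        fix k assume k: "k \<in> {..m}"
        have "S \<subseteq> K" unfolding K_def using iter_sum_single[OF e S(2), of 0 N] by auto
        then have "f k \<in> (\<phi> ^^ k) ` K" using f k by (meson atMost_iff image_mono subsetD)
        then show "f k \<in> (\<phi> ^^ m) ` K" using monoK[of k m] k by auto
      qed
      then show "x \<in> (\<phi> ^^ m) ` K" unfolding f(1) by (rule sub_sum[OF pKsub[of m] finite_atMost])
    qed
    then show "\<exists>m::nat. F \<subseteq> (\<phi> ^^ m) ` K" using m by blast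
  qed
  moreover have "finite K" unfolding K_def using iter_sum_finite[OF S(1)] .
  ultimately show ?thesis using Ksub by blast
qed

end
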